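(* Let $\tilde G=(\mathbf H\oplus\mathbf V,\ast)$ be the Lie group defined below, with Lie algebra $\mathfrak g$, and let $\delta:\mathfrak g\to\mathfrak g\wedge\mathfrak g$ be a 1-cocycle making $(\mathfrak g,\delta)$ a Lie bialgebra. Suppose that in the dual Lie algebra $\mathfrak g^*=\mathbf H^*\oplus\mathbf V^*$ (with bracket $\delta^*$) the subspace $\mathbf H^*$ is an abelian subalgebra. Then for the (unique) Poisson–Lie structure on $\tilde G$ whose linearization at the identity is $\delta$, one has $\{h^i,h^j\}=0$ identically on all of $\tilde G$, for all $i,j$, where $h^i$ are the linear coordinate functions on $\tilde G$ coming from a basis of $\mathbf H^*$.
   Context: $\mathbf H$ and $\mathbf V$ are finite-dimensional real vector spaces; $\mathbf H$ is regarded as a commutative Lie group under addition. $\rho_1,\rho_2:\mathbf H\to GL(\mathbf V)$ are two representations (group homomorphisms) whose images commute with each other. $\tilde G$ is the set $\mathbf H\oplus\mathbf V$ with the group law $(h,v)\ast(h',v')=(h+h',\ \rho_1(h)v'+\rho_2(h')^{-1}v)$; its unit is $(0,0)$ and $(h,v)^{-1}=(-h,-\rho_1(-h)\rho_2(h)v)$. Since $\tilde G$ is diffeomorphic to a vector space (connected and simply connected), every Lie bialgebra structure $\delta$ on its Lie algebra integrates to a unique Poisson–Lie structure on $\tilde G$ whose linearization at the identity is $\delta$. The linear functions $h^i$ (from $\mathbf H^*$) and $v^m$ (from $\mathbf V^*$) are the coordinate functions on $\tilde G$. *)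

theory Defs
  imports "HOL-Analysis.Analysis"
begin

text \<open>A (continuous, hence smooth) representation of the additive group real^'h on real^'v.\<close>
definition is_rep :: "(real^'h \<Rightarrow> real^'v^'v) \<Rightarrow> bool" where
  "is_rep \<rho> \<longleftrightarrow> \<rho> 0 = mat 1 \<and> (\<forall>a b. \<rho> (a + b) = \<rho> a ** \<rho> b) \<and> continuous_on UNIV \<rho>"

definition gmult :: "(real^'h \<Rightarrow> real^'v^'v) \<Rightarrow> (real^'h \<Rightarrow> real^'v^'v)
    \<Rightarrow> ((real^'h) \<times> (real^'v)) \<Rightarrow> ((real^'h) \<times> (real^'v)) \<Rightarrow> ((real^'h) \<times> (real^'v))" where
  "gmult \<rho>1 \<rho>2 p q = (fst p + fst q, \<rho>1 (fst p) *v snd q + matrix_inv (\<rho>2 (fst q)) *v snd p)"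

coinductive Cinf :: "('a::euclidean_space \<Rightarrow> real) \<Rightarrow> bool" where
  "(\<forall>x. f differentiable (at x)) \<Longrightarrow> (\<forall>b\<in>Basis. Cinf (\<lambda>x. frechet_derivative f (at x) b)) \<Longrightarrow> Cinf f"

text \<open>Covectors are represented by vectors via the inner product.
  Gradient (differential) of a function at a point:\<close>
definition grad :: "('a::euclidean_space \<Rightarrow> real) \<Rightarrow> 'a \<Rightarrow> 'a" where
  "grad f x = (\<Sum>b\<in>Basis. frechet_derivative f (at x) b *\<^sub>R b)"

text \<open>Pull-back of a covector along a linear map D (i.e. the covector a o D).\<close>
definition pull :: "('a::euclidean_space \<Rightarrow> 'a) \<Rightarrow> 'a \<Rightarrow> 'a" where
  "pull D a = (\<Sum>b\<in>Basis. (a \<bullet> D b) *\<^sub>R b)"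

text \<open>A bivector field: pi x is a bilinear form on covectors at x.  Poisson bracket:\<close>
definition pbr :: "('a::euclidean_space \<Rightarrow> 'a \<Rightarrow> 'a \<Rightarrow> real) \<Rightarrow> ('a \<Rightarrow> real) \<Rightarrow> ('a \<Rightarrow> real) \<Rightarrow> 'a \<Rightarrow> real" where
  "pbr \<pi> f g x = \<pi> x (grad f x) (grad g x)"

definition poisson_bivector :: "('a::euclidean_space \<Rightarrow> 'a \<Rightarrow> 'a \<Rightarrow> real) \<Rightarrow> bool" where
  "poisson_bivector \<pi> \<longleftrightarrow>
     (\<forall>x. bilinear (\<pi> x) \<and> (\<forall>a b. \<pi> x a b = - \<pi> x b a)) \<and>
     (\<forall>a b. Cinf (\<lambda>x. \<pi> x a b)) \<and>
     (\<forall>f g k x. Cinf f \<longrightarrow> Cinf g \<longrightarrow> Cinf k \<longrightarrow>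
        pbr \<pi> f (pbr \<pi> g k) x + pbr \<pi> g (pbr \<pi> k f) x + pbr \<pi> k (pbr \<pi> f g) x = 0)"

text \<open>Multiplicativity: pi(g*k) = (L_g)_* pi(k) + (R_k)_* pi(g).\<close>
definition multiplicative :: "('a::euclidean_space \<Rightarrow> 'a \<Rightarrow> 'a) \<Rightarrow> ('a \<Rightarrow> 'a \<Rightarrow> 'a \<Rightarrow> real) \<Rightarrow> bool" where
  "multiplicative m \<pi> \<longleftrightarrow> (\<forall>g k a b.
     \<pi> (m g k) a b =
       \<pi> k (pull (frechet_derivative (\<lambda>y. m g y) (at k)) a) (pull (frechet_derivative (\<lambda>y. m g y) (at k)) b)
     + \<pi> g (pull (frechet_derivative (\<lambda>y. m y k) (at g)) a) (pull (frechet_derivative (\<lambda>y. m y k) (at g)) b))"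

definition poisson_lie :: "('a::euclidean_space \<Rightarrow> 'a \<Rightarrow> 'a) \<Rightarrow> ('a \<Rightarrow> 'a \<Rightarrow> 'a \<Rightarrow> real) \<Rightarrow> bool" where
  "poisson_lie m \<pi> \<longleftrightarrow> poisson_bivector \<pi> \<and> multiplicative m \<pi>"

definition linearization :: "'a \<Rightarrow> ('a::euclidean_space \<Rightarrow> 'a \<Rightarrow> 'a \<Rightarrow> real) \<Rightarrow> 'a \<Rightarrow> 'a \<Rightarrow> 'a \<Rightarrow> real" where
  "linearization e \<pi> X a b = frechet_derivative (\<lambda>x. \<pi> x a b) (at e) X"

definition dual_bracket :: "'a \<Rightarrow> ('a::euclidean_space \<Rightarrow> 'a \<Rightarrow> 'a \<Rightarrow> real) \<Rightarrow> 'a \<Rightarrow> 'a \<Rightarrow> ('a \<Rightarrow> real)" where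
  "dual_bracket e \<pi> a b = (\<lambda>X. linearization e \<pi> X a b)"

end

theory Submission
  imports Defs
begin


lemma inj_near_id:
  fixes E :: "real^'n^'n"
  assumes "\<And>i j. \<bar>E $ i $ j\<bar> \<le> e / (2 * (real CARD('n) * real CARD('n)))" and "e > 0"
  shows "invertible (E + e *\<^sub>R mat 1)"
proof -
  have K: "real CARD('n) * real CARD('n) > 0" by simp
  have on: "onorm ((*v) E) \<le> real CARD('n) * real CARD('n) * (e / (2 * (real CARD('n) * real CARD('n))))"
    by (rule onorm_le_matrix_component) (use assms in auto)
  also have "\<dots> = e/2" using K by (simp add: field_simps)
  finally have on2: "onorm ((*v) E) \<le> e/2" .
  have "inj ((*v) (E + e *\<^sub>R mat 1))"
  proof (rule linear_injective_0[THEN iffD2])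
    show "linear ((*v) (E + e *\<^sub>R mat 1))" by simp
    show "\<forall>x. (E + e *\<^sub>R mat 1) *v x = 0 \<longrightarrow> x = 0"
    proof (intro allI impI)
      fix x :: "real^'n"
      assume "(E + e *\<^sub>R mat 1) *v x = 0"
      then have "E *v x = - (e *\<^sub>R x)"
        by (simp add: matrix_vector_mult_add_rdistrib scaleR_matrix_vector_assoc[symmetric] eq_neg_iff_add_eq_0)
      then have "norm (e *\<^sub>R x) = norm (E *v x)" by simp
      also have "\<dots> \<le> onorm ((*v) E) * norm x" by (rule onorm) simp
      also have "\<dots> \<le> e/2 * norm x" by (rule mult_right_mono[OF on2]) simp
      finally have "e * norm x \<le> e/2 * norm x" using assms(2) by simp
      then have ex: "e * norm x \<le> e/2 * norm x" .
      show "x = 0"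
      proof (rule ccontr)
        assume "x \<noteq> 0"
        then have "norm x > 0" by simp
        then have "e/2 * norm x > 0" using assms(2) by simp
        with ex show False by (simp add: field_simps)
      qed
    qed
  qed
  then show ?thesis
    by (simp add: invertible_left_inverse matrix_left_invertible_injective[symmetric])
qed
lemma bb_mm: "bounded_bilinear (\<lambda>(A::real^'n^'m) (B::real^'k^'n). A ** B)"
proof -
  have "bilinear (\<lambda>(A::real^'n^'m) (B::real^'k^'n). A ** B)"
    unfolding bilinear_def
    by (auto intro!: linearI simp: vec_eq_iff matrix_matrix_mult_def sum.distrib algebra_simps sum_distrib_left)
  then show ?thesis by (simp add: bilinear_conv_bounded_bilinear)
qed

lemma hom1_diff0:
  fixes \<phi> :: "real \<Rightarrow> real^'n^'n"
  assumes cont: "continuous_on UNIV \<phi>" and hom: "\<And>s t. \<phi> (s+t) = \<phi> s ** \<phi> t"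
    and one: "\<phi> 0 = mat 1"
  shows "\<phi> differentiable (at 0)"
proof -
  define K where "K = real CARD('n) * real CARD('n)"
  have Kp: "K > 0" by (simp add: K_def)
  have "continuous (at 0) \<phi>" using cont by (simp add: continuous_on_eq_continuous_at)
  moreover have "1/(2*K) > 0" using Kp by simp
  ultimately obtain \<delta> where \<delta>: "\<delta> > 0" "\<And>s. dist s 0 < \<delta> \<Longrightarrow> dist (\<phi> s) (\<phi> 0) < 1/(2*K)"
    unfolding continuous_at_eps_delta by blast
  define \<epsilon> where "\<epsilon> = min (\<delta>/2) 1"
  have ep: "\<epsilon> > 0" "\<epsilon> \<le> 1" "\<epsilon> < \<delta>" using \<delta> by (auto simp: \<epsilon>_def)
  have c\<phi>: "\<And>a b. continuous_on {a..b} \<phi>" by (rule continuous_on_subset[OF cont]) auto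
  have int: "\<And>a b. \<phi> integrable_on {a..b}" using integrable_continuous_interval c\<phi> by blast
  define M where "M = integral {0..\<epsilon>} \<phi>"
  define E where "E = M - \<epsilon> *\<^sub>R mat 1"
  have E_int: "E = integral {0..\<epsilon>} (\<lambda>s. \<phi> s - mat 1)"
    using ep by (simp add: E_def M_def integral_diff[OF int integrable_const_ivl])
  have "((\<lambda>s. \<phi> s - mat 1) has_integral E) (cbox 0 \<epsilon>)"
    unfolding E_int cbox_interval
    by (rule integrable_integral) (intro integrable_diff int integrable_const_ivl)
  note hi = this
  have bnd: "norm (\<phi> x - mat 1) \<le> 1/(2*K)" if "x \<in> cbox 0 \<epsilon>" for x
  proof -
    from that have "dist x 0 < \<delta>" using ep by (auto simp: cbox_interval dist_real_def)
    from \<delta>(2)[OF this] show ?thesis by (simp add: dist_norm one)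
  qed
  have "0 \<le> 1/(2*K)" using Kp by simp
  from has_integral_bound[OF this hi bnd]
  have nE': "norm E \<le> \<epsilon> / (2*K)" using ep by (simp add: cbox_interval)
  have "\<bar>E $ i $ j\<bar> \<le> \<epsilon> / (2*K)" for i j
  proof -
    have "\<bar>E $ i $ j\<bar> \<le> norm (E $ i)" by (rule component_le_norm_cart)
    also have "\<dots> \<le> norm E" by (rule Finite_Cartesian_Product.norm_nth_le)
    finally show ?thesis using nE' by linarith
  qed
  then have invM: "invertible M"
    using inj_near_id[of E \<epsilon>] ep by (simp add: K_def E_def)
  then obtain Mi where Mi: "M ** Mi = mat 1" unfolding invertible_def by blast
  define F where "F x = integral {-1..x} \<phi>" for x
  have Fd: "(F has_vector_derivative \<phi> x) (at x)" if "-1 < x" "x < 2" for x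
  proof -
    have "(F has_vector_derivative \<phi> x) (at x within {-1..2})"
      unfolding F_def by (rule integral_has_vector_derivative[OF c\<phi>]) (use that in auto)
    moreover have "at x within {-1..2} = at x"
      by (rule at_within_interior) (use that in auto)
    ultimately show ?thesis by simp
  qed
  have blR: "bounded_linear (\<lambda>A. P ** (A::real^'n^'n))" for P :: "real^'n^'n"
    using bounded_bilinear.bounded_linear_right[OF bb_mm] by blast
  have blL: "bounded_linear (\<lambda>A. (A::real^'n^'n) ** P)" for P :: "real^'n^'n"
    using bounded_bilinear.bounded_linear_left[OF bb_mm] by blast
  have key: "\<phi> x ** M = F (x+\<epsilon>) - F x" if x: "x \<in> {-1<..<1}" for x
  proof -
    have "\<phi> x ** M = integral {0..\<epsilon>} ((\<lambda>A. \<phi> x ** A) \<circ> \<phi>)"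
      unfolding M_def by (rule integral_linear[symmetric, OF int blR])
    also have "\<dots> = integral {0..\<epsilon>} (\<phi> \<circ> (+) x)"
      by (simp add: o_def hom[symmetric])
    also have "\<dots> = integral {x..x+\<epsilon>} \<phi>"
      by (simp add: integral_shift_Icc_real add.commute)
    also have "\<dots> = F (x+\<epsilon>) - F x"
      unfolding F_def using Henstock_Kurzweil_Integration.integral_combine[of "-1" x "x+\<epsilon>" \<phi>] int ep x by (auto simp: algebra_simps eq_diff_eq)
    finally show ?thesis .
  qed
  have \<phi>eq: "\<phi> x = (F (x+\<epsilon>) - F x) ** Mi" if "x \<in> {-1<..<1}" for x
  proof -
    have "\<phi> x = \<phi> x ** (M ** Mi)" by (simp add: Mi)
    also have "\<dots> = (\<phi> x ** M) ** Mi" by (simp add: matrix_mul_assoc)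
    finally show ?thesis using key[OF that] by simp
  qed
  have d1: "((\<lambda>x. F (x+\<epsilon>)) has_vector_derivative \<phi> \<epsilon>) (at 0)"
  proof -
    have "((\<lambda>x. x+\<epsilon>) has_vector_derivative 1) (at 0)"
      by (auto intro!: derivative_eq_intros simp: has_vector_derivative_def)
    moreover have "(F has_vector_derivative \<phi> \<epsilon>) (at (0+\<epsilon>))" using Fd ep by simp
    ultimately show ?thesis using vector_diff_chain_at[of "\<lambda>x. x+\<epsilon>" 1 0 F "\<phi> \<epsilon>"] by (simp add: o_def)
  qed
  have d2: "(F has_vector_derivative \<phi> 0) (at 0)" using Fd by simp
  have "((\<lambda>x. (F (x+\<epsilon>) - F x) ** Mi) has_derivative (\<lambda>h. (h *\<^sub>R \<phi> \<epsilon> - h *\<^sub>R \<phi> 0) ** Mi)) (at 0)"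
    using bounded_linear.has_derivative[OF blL has_derivative_diff[OF d1[unfolded has_vector_derivative_def] d2[unfolded has_vector_derivative_def]]] .
  then have "(\<phi> has_derivative (\<lambda>h. (h *\<^sub>R \<phi> \<epsilon> - h *\<^sub>R \<phi> 0) ** Mi)) (at 0)"
    by (rule has_derivative_transform_within_open[where s="{-1<..<1}"]) (auto simp del: F_def intro: \<phi>eq[symmetric])
  then show ?thesis unfolding differentiable_def by blast
qed



lemma bl_mm_R: "bounded_linear (\<lambda>A. P ** (A::real^'n^'n))" for P :: "real^'n^'m"
  using bounded_bilinear.bounded_linear_right[OF bb_mm] by blast

lemma hom1_diff:
  fixes \<phi> :: "real \<Rightarrow> real^'n^'n"
  assumes cont: "continuous_on UNIV \<phi>" and hom: "\<And>s t. \<phi> (s+t) = \<phi> s ** \<phi> t"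
    and one: "\<phi> 0 = mat 1"
  shows "\<phi> differentiable (at t)"
proof -
  obtain D where D: "(\<phi> has_derivative D) (at 0)"
    using hom1_diff0[OF assms] unfolding differentiable_def by blast
  have "((\<lambda>x. x - t) has_derivative (\<lambda>h. h)) (at t)"
    by (auto intro!: derivative_eq_intros)
  moreover have "(\<phi> has_derivative D) (at ((\<lambda>x. x - t) t))" using D by simp
  ultimately have "((\<lambda>x. \<phi> (x - t)) has_derivative (\<lambda>h. D h)) (at t)"
    using has_derivative_compose[of "\<lambda>x. x - t" "\<lambda>h. h" t UNIV \<phi> D] by (simp add: o_def)
  from bounded_linear.has_derivative[OF bl_mm_R[of "\<phi> t"] this]
  have "((\<lambda>x. \<phi> t ** \<phi> (x - t)) has_derivative (\<lambda>h. \<phi> t ** D h)) (at t)" .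
  moreover have "\<phi> t ** \<phi> (x - t) = \<phi> x" for x using hom[of t "x - t"] by simp
  ultimately show ?thesis unfolding differentiable_def by auto
qed



lemma rep_diff:
  fixes \<rho> :: "real^'h \<Rightarrow> real^'v^'v"
  assumes "is_rep \<rho>"
  shows "\<rho> differentiable (at x)"
proof -
  have r0: "\<rho> 0 = mat 1" and hom: "\<And>a b. \<rho> (a+b) = \<rho> a ** \<rho> b" and cont: "continuous_on UNIV \<rho>"
    using assms by (auto simp: is_rep_def)
  have \<phi>d: "(\<lambda>s. \<rho> (s *\<^sub>R axis i 1)) differentiable (at t)" for i t
  proof (rule hom1_diff)
    show "continuous_on UNIV (\<lambda>s. \<rho> (s *\<^sub>R axis i 1))"
      by (rule continuous_on_compose2[OF cont]) (auto intro!: continuous_intros)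
    show "\<rho> ((s + t) *\<^sub>R axis i 1) = \<rho> (s *\<^sub>R axis i 1) ** \<rho> (t *\<^sub>R axis i 1)" for s t
      by (simp add: scaleR_add_left hom)
    show "\<rho> (0 *\<^sub>R axis i 1) = mat 1" by (simp add: r0)
  qed
  have S: "finite S \<Longrightarrow> \<forall>x. (\<lambda>y. \<rho> (\<Sum>i\<in>S. (y$i) *\<^sub>R axis i 1)) differentiable (at x)" for S
  proof (induction S rule: finite_induct)
    case empty
    then show ?case by simp
  next
    case (insert i S)
    show ?case
    proof
      fix x
      have "(\<lambda>y::real^'h. y $ i) differentiable (at x)"
        by (rule bounded_linear_imp_differentiable) (rule bounded_linear_vec_nth)
      then have d1: "(\<lambda>y::real^'h. \<rho> ((y$i) *\<^sub>R axis i 1)) differentiable (at x)"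
        using differentiable_chain_at[of "\<lambda>y. y $ i" x "\<lambda>s. \<rho> (s *\<^sub>R axis i 1)"] \<phi>d by (simp add: o_def)
      from d1 obtain D1 where D1: "((\<lambda>y::real^'h. \<rho> ((y$i) *\<^sub>R axis i 1)) has_derivative D1) (at x)"
        unfolding differentiable_def by blast
      from insert.IH obtain D2 where D2: "((\<lambda>y. \<rho> (\<Sum>i\<in>S. (y$i) *\<^sub>R axis i 1)) has_derivative D2) (at x)"
        unfolding differentiable_def by blast
      note bounded_bilinear.FDERIV[OF bb_mm D1 D2]
      moreover have "\<rho> ((y$i) *\<^sub>R axis i 1) ** \<rho> (\<Sum>i\<in>S. (y$i) *\<^sub>R axis i 1) = \<rho> (\<Sum>i\<in>insert i S. (y$i) *\<^sub>R axis i 1)" for y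
        using insert.hyps by (simp add: hom)
      ultimately show "(\<lambda>y. \<rho> (\<Sum>i\<in>insert i S. (y$i) *\<^sub>R axis i 1)) differentiable (at x)"
        unfolding differentiable_def by auto
    qed
  qed
  have "(\<lambda>y. \<rho> (\<Sum>i\<in>UNIV. (y$i) *\<^sub>R axis i 1)) differentiable (at x)" using S by simp
  moreover have "(\<Sum>i\<in>UNIV. (y$i) *\<^sub>R axis i 1) = y" for y :: "real^'h"
    using basis_expansion[of y] by (simp add: scalar_mult_eq_scaleR)
  ultimately show ?thesis by simp
qed



lemma bb_mv: "bounded_bilinear (\<lambda>(A::real^'n^'m) (x::real^'n). A *v x)"
proof -
  have "bilinear (\<lambda>(A::real^'n^'m) (x::real^'n). A *v x)"
    unfolding bilinear_def
    by (auto intro!: linearI simp: vec_eq_iff matrix_vector_mult_def sum.distrib algebra_simps sum_distrib_left)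
  then show ?thesis by (simp add: bilinear_conv_bounded_bilinear)
qed

lemma rep_facts:
  fixes \<rho> :: "real^'h \<Rightarrow> real^'v^'v"
  assumes "is_rep \<rho>"
  shows "\<rho> 0 = mat 1" "\<rho> (a+b) = \<rho> a ** \<rho> b" "\<rho> a ** \<rho> (-a) = mat 1" "\<rho> (-a) ** \<rho> a = mat 1"
    "matrix_inv (\<rho> a) = \<rho> (-a)"
proof -
  show r0: "\<rho> 0 = mat 1" and hom: "\<rho> (a+b) = \<rho> a ** \<rho> b" using assms by (auto simp: is_rep_def)
  have hom': "\<And>a b. \<rho> (a+b) = \<rho> a ** \<rho> b" using assms by (auto simp: is_rep_def)
  show i1: "\<rho> a ** \<rho> (-a) = mat 1" using hom'[of a "-a"] r0 by simp
  show i2: "\<rho> (-a) ** \<rho> a = mat 1" using hom'[of "-a" a] r0 by simp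
  define A' where "A' = matrix_inv (\<rho> a)"
  have "\<rho> a ** A' = mat 1 \<and> A' ** \<rho> a = mat 1"
    unfolding A'_def matrix_inv_def by (rule someI[of _ "\<rho> (-a)"]) (use i1 i2 in auto)
  then have "A' = A' ** (\<rho> a ** \<rho> (-a))" "A' ** \<rho> a = mat 1" using i1 by auto
  then have "A' = \<rho> (-a)" by (metis matrix_mul_assoc matrix_mul_lid)
  then show "matrix_inv (\<rho> a) = \<rho> (-a)" by (simp add: A'_def)
qed

lemma rep_vec_deriv:
  fixes \<rho> :: "real^'h \<Rightarrow> real^'v^'v"
  assumes "is_rep \<rho>" and L: "bounded_linear L"
  shows "\<exists>C. ((\<lambda>y. \<rho> (L y) *v v) has_derivative C) (at x)"
proof -
  obtain D where D: "(\<rho> has_derivative D) (at (L x))" using rep_diff[OF assms(1)] unfolding differentiable_def by blast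
  have "((\<rho> \<circ> L) has_derivative (D \<circ> L)) (at x)"
    by (rule diff_chain_at[OF bounded_linear.has_derivative[OF L has_derivative_ident] D])
  from bounded_linear.has_derivative[OF bounded_bilinear.bounded_linear_left[OF bb_mv, of v] this]
  show ?thesis by (auto simp: o_def)
qed

lemma pull_id:
  fixes D :: "('a::euclidean_space \<times> 'b::euclidean_space) \<Rightarrow> 'a \<times> 'b"
  assumes "\<And>w. fst (D w) = fst w"
  shows "pull D (a, 0) = (a, 0)"
proof -
  have "pull D (a, 0) = (\<Sum>b\<in>Basis. ((a, 0) \<bullet> b) *\<^sub>R b)"
    unfolding pull_def by (intro sum.cong refl) (simp add: inner_Pair_0 assms inner_commute)
  also have "\<dots> = (a, 0)"
    using euclidean_representation[of "(a, 0::'b)"] by (simp add: inner_commute)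
  finally show ?thesis .
qed

lemma fst_deriv:
  assumes "(f has_derivative D) (at k)" and "\<And>y. fst (f y) = c + fst y"
  shows "fst (D w) = fst w"
proof -
  have "((\<lambda>y. fst (f y)) has_derivative (\<lambda>h. fst (D h))) (at k)"
    using has_derivative_fst[OF assms(1)] .
  moreover have "((\<lambda>y. fst (f y)) has_derivative (\<lambda>h. fst h)) (at k)"
    unfolding assms(2) by (auto intro!: derivative_eq_intros)
  ultimately have "(\<lambda>h. fst (D h)) = (\<lambda>h. fst h)" by (rule has_derivative_unique)
  then show ?thesis by metis
qed

lemma grad_coord:
  fixes i :: "'h::finite"
  shows "grad (\<lambda>y::(real^'h) \<times> (real^'v). fst y $ i) x = (axis i 1, 0)"
proof -
  have "((\<lambda>y::(real^'h) \<times> (real^'v). fst y $ i) has_derivative (\<lambda>h. fst h $ i)) (at x)"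
    by (auto intro!: derivative_eq_intros bounded_linear.has_derivative[OF bounded_linear_vec_nth])
  then have fd: "frechet_derivative (\<lambda>y::(real^'h) \<times> (real^'v). fst y $ i) (at x) = (\<lambda>h. fst h $ i)"
    by (rule frechet_derivative_at[symmetric])
  have "grad (\<lambda>y::(real^'h) \<times> (real^'v). fst y $ i) x = (\<Sum>b\<in>Basis. (b \<bullet> (axis i 1, 0::real^'v)) *\<^sub>R b)"
    unfolding grad_def fd by (intro sum.cong refl) (simp add: inner_Pair_0 inner_axis)
  also have "\<dots> = (axis i 1, 0)"
    using euclidean_representation[of "(axis i (1::real), 0::real^'v)"] by (simp add: inner_commute)
  finally show ?thesis .
qed



theorem lemma1:
  fixes \<rho>1 \<rho>2 :: "real^'h \<Rightarrow> real^'v^'v"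
    and \<pi> :: "((real^'h) \<times> (real^'v)) \<Rightarrow> ((real^'h) \<times> (real^'v)) \<Rightarrow> ((real^'h) \<times> (real^'v)) \<Rightarrow> real"
  assumes "is_rep \<rho>1" and "is_rep \<rho>2"
    and "\<forall>a b. \<rho>1 a ** \<rho>2 b = \<rho>2 b ** \<rho>1 a"
    and "poisson_lie (gmult \<rho>1 \<rho>2) \<pi>"
    and "\<forall>a b. dual_bracket (0, 0) \<pi> (a, 0) (b, 0) = (\<lambda>X. 0)"
  shows "\<forall>i j x. pbr \<pi> (\<lambda>y. fst y $ i) (\<lambda>y. fst y $ j) x = 0"
proof -
  note r1 = rep_facts[OF assms(1)] and r2 = rep_facts[OF assms(2)]
  define m where "m = gmult \<rho>1 \<rho>2"
  have m_eq: "m p q = (fst p + fst q, \<rho>1 (fst p) *v snd q + \<rho>2 (- fst q) *v snd p)" for p q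
    by (simp add: m_def gmult_def r2(5))
  have mult: "multiplicative m \<pi>" and pb: "poisson_bivector \<pi>"
    using assms(4) by (auto simp: poisson_lie_def m_def)
  have dL: "\<exists>D. (m g has_derivative D) (at k)" for g k
  proof -
    obtain C where C: "((\<lambda>y. \<rho>2 (uminus y) *v snd g) has_derivative C) (at (fst k))"
      using rep_vec_deriv[OF assms(2) bounded_linear_minus[OF bounded_linear_ident]] by blast
    have "((\<lambda>y. \<rho>2 (- fst y) *v snd g) has_derivative (\<lambda>w. C (fst w))) (at k)"
      using diff_chain_at[OF has_derivative_fst[OF has_derivative_ident] C] by (simp add: o_def)
    then have "(m g has_derivative (\<lambda>w. (fst w, \<rho>1 (fst g) *v snd w + C (fst w)))) (at k)"
      unfolding m_eq[abs_def]
      by (auto intro!: derivative_eq_intros bounded_linear.has_derivative[OF matrix_vector_mul_bounded_linear])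
    then show ?thesis by blast
  qed
  have dR: "\<exists>D. ((\<lambda>y. m y k) has_derivative D) (at g)" for g k
  proof -
    obtain C where C: "((\<lambda>y. \<rho>1 y *v snd k) has_derivative C) (at (fst g))"
      using rep_vec_deriv[OF assms(1) bounded_linear_ident] by blast
    have "((\<lambda>y. \<rho>1 (fst y) *v snd k) has_derivative (\<lambda>w. C (fst w))) (at g)"
      using diff_chain_at[OF has_derivative_fst[OF has_derivative_ident] C] by (simp add: o_def)
    then have "((\<lambda>y. m y k) has_derivative (\<lambda>w. (fst w, C (fst w) + \<rho>2 (- fst k) *v snd w))) (at g)"
      unfolding m_eq[abs_def]
      by (auto intro!: derivative_eq_intros bounded_linear.has_derivative[OF matrix_vector_mul_bounded_linear])
    then show ?thesis by blast
  qed
  have pullL: "pull (frechet_derivative (m g) (at k)) (a, 0) = (a, 0)" for g k a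
  proof -
    obtain D where D: "(m g has_derivative D) (at k)" using dL by blast
    have "fst (D w) = fst w" for w by (rule fst_deriv[OF D]) (simp add: m_eq)
    then show ?thesis using frechet_derivative_at[OF D] pull_id by metis
  qed
  have pullR: "pull (frechet_derivative (\<lambda>y. m y k) (at g)) (a, 0) = (a, 0)" for g k a
  proof -
    obtain D where D: "((\<lambda>y. m y k) has_derivative D) (at g)" using dR by blast
    have "fst (D w) = fst w" for w by (rule fst_deriv[OF D, where c="fst k"]) (simp add: m_eq add.commute)
    then show ?thesis using frechet_derivative_at[OF D] pull_id by metis
  qed
  have main: "\<pi> x (a, 0) (b, 0) = 0" for x a b
  proof -
    define f where "f x = \<pi> x (a, 0) (b, 0)" for x
    have add: "f (m g k) = f k + f g" for g k
      using mult[unfolded multiplicative_def, rule_format, of g k "(a,0)" "(b,0)"]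
      unfolding f_def by (simp only: pullL pullR)
    have e: "m (0, 0) (0, 0) = (0, 0)" by (simp add: m_eq)
    have fe: "f (0, 0) = 0" using add[of "(0,0)" "(0,0)"] e by simp
    have "Cinf f" using pb unfolding poisson_bivector_def f_def by blast
    then have fdiff: "f differentiable (at x)" for x by (cases rule: Cinf.cases) (metis prod.collapse)
    have df0: "frechet_derivative f (at (0, 0)) = (\<lambda>X. 0)"
      using assms(5) unfolding dual_bracket_def linearization_def f_def by blast
    have dfg: "frechet_derivative f (at g) = (\<lambda>X. 0)" for g
    proof
      fix z
      obtain C where C: "((\<lambda>y. \<rho>2 (uminus y) *v snd g) has_derivative C) (at (fst (0::real^'h, 0::real^'v)))"
        using rep_vec_deriv[OF assms(2) bounded_linear_minus[OF bounded_linear_ident]] by blast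
      have "((\<lambda>y. \<rho>2 (- fst y) *v snd g) has_derivative (\<lambda>w. C (fst w))) (at (0::real^'h, 0::real^'v))"
        using diff_chain_at[OF has_derivative_fst[OF has_derivative_ident] C] by (simp add: o_def)
      then have DL: "(m g has_derivative (\<lambda>w. (fst w, \<rho>1 (fst g) *v snd w + C (fst w)))) (at (0, 0))"
        unfolding m_eq[abs_def]
        by (auto intro!: derivative_eq_intros bounded_linear.has_derivative[OF matrix_vector_mul_bounded_linear])
      have mg0: "m g (0, 0) = g" by (simp add: m_eq r2(1))
      have Df: "(f has_derivative frechet_derivative f (at g)) (at (m g (0,0)))"
        using fdiff frechet_derivative_works mg0 by metis
      have c1: "((\<lambda>y. f (m g y)) has_derivative (\<lambda>w. frechet_derivative f (at g) (fst w, \<rho>1 (fst g) *v snd w + C (fst w)))) (at (0, 0))"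
        using diff_chain_at[OF DL Df] by (simp add: o_def)
      have "(f has_derivative (\<lambda>X. 0)) (at (0, 0))"
        using fdiff frechet_derivative_works df0 by metis
      then have c2: "((\<lambda>y. f (m g y)) has_derivative (\<lambda>w. 0)) (at (0, 0))"
        unfolding add by (auto intro!: derivative_eq_intros)
      have eq0: "frechet_derivative f (at g) (fst w, \<rho>1 (fst g) *v snd w + C (fst w)) = 0" for w
        using has_derivative_unique[OF c1 c2] by metis
      define w where "w = (fst z, \<rho>1 (- fst g) *v (snd z - C (fst z)))"
      have "(fst w, \<rho>1 (fst g) *v snd w + C (fst w)) = z"
        by (simp add: w_def matrix_vector_mul_assoc r1(3))
      then show "frechet_derivative f (at g) z = 0" using eq0[of w] by simp
    qed
    have "\<exists>c. \<forall>x\<in>UNIV. f x = c"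
    proof (rule has_derivative_zero_constant)
      fix x :: "(real^'h) \<times> (real^'v)"
      show "(f has_derivative (\<lambda>h. 0)) (at x within UNIV)"
        using fdiff[of x] frechet_derivative_works dfg by metis
    qed simp
    then have "f x = f (0, 0)" by (metis UNIV_I)
    then show ?thesis using fe f_def by simp
  qed
  show ?thesis
    by (simp add: pbr_def grad_coord main)
qed


end
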